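(* Let $n\ge 2$. (1) The set $\mathcal{O}_n(\mathbb{R})=\{O_M\mid M\in Mat^{tnz}_{2n}(\mathbb{R})\}$ of orientation sign matrices is in bijection with the set of right cosets of $K_n$ in $P_n$, and has cardinality $2^{n-1}(n-1)!$. (2) The set $\mathcal{S}^{tnz}_{2n}(\mathbb{R})$ of non-empty strata, which is in bijection with the orbit space $(\mathbb{Z}/2\mathbb{Z})\backslash\mathcal{O}_n(\mathbb{R})$, has cardinality $2^{n-2}(n-1)!$.
   Context: $Mat^{tnz}_{2n}(\mathbb{R})$ is the set of real $2\times n$ matrices all of whose $2\times2$ maximal minors are nonzero. For $M=(v_1,\dots,v_n)\in Mat^{tnz}_{2n}(\mathbb{R})$ the orientation sign matrix is $O_M=[\operatorname{sgn}\det(v_i,v_j)]_{1\le i,j\le n}$. The group $\mathbb{Z}/2\mathbb{Z}=\{\pm1\}$ acts on $\mathcal{O}_n(\mathbb{R})$ by $-1\bullet O_M=O_N$ with $N=(v_n,\dots,v_1)$ (so $O_N=-O_M=O_M^t$). $Gr^{tnz}_{2n}(\mathbb{R})=GL_2(\mathbb{R})\backslash Mat^{tnz}_{2n}(\mathbb{R})$; for $\mathcal{C}\subseteq\binom{[n]}{2}$ the stratum $\mathcal{S}^{tnz}_{\mathcal{C}}(\mathbb{R})$ consists of $GL_2(\mathbb{R})M$ such that the minor $\Delta_I(M)$ is positive exactly for $I\in\mathcal{C}$, or negative exactly for $I\in\mathcal{C}$; $\mathcal{S}^{tnz}_{2n}(\mathbb{R})$ is the set of non-empty strata. $P_n=\{(a_1,\dots,a_n)\in\{\pm1,\dots,\pm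 n\}^n\mid i\mapsto|a_i|\text{ is a permutation}\}$ is the signed permutation group, identified with the group of signed permutation matrices via $(a_1,\dots,a_n)\mapsto(\operatorname{sgn}(a_1)e_{|a_1|}^t,\dots,\operatorname{sgn}(a_n)e_{|a_n|}^t)$ (columns; $e_k$ standard basis vectors) with matrix multiplication; $|P_n|=2^nn!$. $K_n$ is the cyclic subgroup of order $2n$ generated by $(-n,1,2,\dots,n-1)\in P_n$. *)

theory Defs
  imports "HOL-Algebra.Coset" "HOL-Algebra.Generated_Groups" Complex_Main
begin

(* Columns of a real 2 x n matrix are indexed by {1..n}; a matrix is a map
   nat => real x real, required to be (0,0) outside {1..n}. *)

definition det2 :: "real \<times> real \<Rightarrow> real \<times> real \<Rightarrow> real" where
  "det2 v w = fst v * snd w - snd v * fst w"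

definition pairs :: "nat \<Rightarrow> nat set set" where
  "pairs n = {I. I \<subseteq> {1..n} \<and> card I = 2}"

definition minor :: "(nat \<Rightarrow> real \<times> real) \<Rightarrow> nat set \<Rightarrow> real" where
  "minor M I = det2 (M (Min I)) (M (Max I))"

definition Mat_tnz :: "nat \<Rightarrow> (nat \<Rightarrow> real \<times> real) set" where
  "Mat_tnz n = {M. (\<forall>i. i \<notin> {1..n} \<longrightarrow> M i = (0, 0)) \<and>
                   (\<forall>I \<in> pairs n. minor M I \<noteq> 0)}"

definition orient :: "nat \<Rightarrow> (nat \<Rightarrow> real \<times> real) \<Rightarrow> nat \<Rightarrow> nat \<Rightarrow> real" where
  "orient n M = (\<lambda>i j. if i \<in> {1..n} \<and> j \<in> {1..n} then sgn (det2 (M i) (M j)) else 0)"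

definition Ospace :: "nat \<Rightarrow> (nat \<Rightarrow> nat \<Rightarrow> real) set" where
  "Ospace n = orient n ` Mat_tnz n"

(* Z/2 action: -1 acts by O |-> -O ; orbit space *)
definition Ospace_orbits :: "nat \<Rightarrow> (nat \<Rightarrow> nat \<Rightarrow> real) set set" where
  "Ospace_orbits n = {{Q, (\<lambda>i j. - Q i j)} | Q. Q \<in> Ospace n}"

(* GL_2(R) acting on the left: A = (a,b,c,d) the matrix [[a,b],[c,d]] *)
definition gl_act :: "real \<times> real \<times> real \<times> real \<Rightarrow> (nat \<Rightarrow> real \<times> real) \<Rightarrow> (nat \<Rightarrow> real \<times> real)" where
  "gl_act A M = (case A of (a, b, c, d) \<Rightarrow>
      (\<lambda>i. (a * fst (M i) + b * snd (M i), c * fst (M i) + d * snd (M i))))"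

definition GL2 :: "(real \<times> real \<times> real \<times> real) set" where
  "GL2 = {(a, b, c, d). a * d - b * c \<noteq> 0}"

definition gl_orbit :: "(nat \<Rightarrow> real \<times> real) \<Rightarrow> (nat \<Rightarrow> real \<times> real) set" where
  "gl_orbit M = {gl_act A M | A. A \<in> GL2}"

definition Gr_tnz :: "nat \<Rightarrow> (nat \<Rightarrow> real \<times> real) set set" where
  "Gr_tnz n = gl_orbit ` Mat_tnz n"

definition stratum :: "nat \<Rightarrow> nat set set \<Rightarrow> (nat \<Rightarrow> real \<times> real) set set" where
  "stratum n C = {X \<in> Gr_tnz n. \<exists>M \<in> X.
      (\<forall>I \<in> pairs n. minor M I > 0 \<longleftrightarrow> I \<in> C) \<or>
      (\<forall>I \<in> pairs n. minor M I < 0 \<longleftrightarrow> I \<in> C)}"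

definition strata :: "nat \<Rightarrow> (nat \<Rightarrow> real \<times> real) set set set" where
  "strata n = {stratum n C | C. C \<subseteq> pairs n \<and> stratum n C \<noteq> {}}"

(* signed permutations (a_1,...,a_n), stored as nat => int, zero outside {1..n} *)
definition Pn :: "nat \<Rightarrow> (nat \<Rightarrow> int) set" where
  "Pn n = {a. (\<forall>i. i \<notin> {1..n} \<longrightarrow> a i = 0) \<and>
              bij_betw (\<lambda>i. nat \<bar>a i\<bar>) {1..n} {1..n}}"

(* product of the corresponding signed permutation matrices:
   (AB) e_i = sgn(b_i) A e_|b_i| = sgn(b_i) sgn(a_|b_i|) e_|a_|b_i||  *)
definition sp_mult :: "nat \<Rightarrow> (nat \<Rightarrow> int) \<Rightarrow> (nat \<Rightarrow> int) \<Rightarrow> (nat \<Rightarrow> int)" where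
  "sp_mult n a b = (\<lambda>i. if i \<in> {1..n} then sgn (b i) * a (nat \<bar>b i\<bar>) else 0)"

definition sp_one :: "nat \<Rightarrow> nat \<Rightarrow> int" where
  "sp_one n = (\<lambda>i. if i \<in> {1..n} then int i else 0)"

definition SP :: "nat \<Rightarrow> (nat \<Rightarrow> int) monoid" where
  "SP n = \<lparr>carrier = Pn n, mult = sp_mult n, one = sp_one n\<rparr>"

definition Kgen :: "nat \<Rightarrow> nat \<Rightarrow> int" where
  "Kgen n = (\<lambda>i. if i = 1 then - int n else if 2 \<le> i \<and> i \<le> n then int i - 1 else 0)"

definition Kn :: "nat \<Rightarrow> (nat \<Rightarrow> int) set" where
  "Kn n = generate (SP n) {Kgen n}"

end

theory Submission
  imports Defs "HOL-Combinatorics.Permutations" "HOL-Algebra.Multiplicative_Group"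
begin


lemma pairs_elim:
  assumes "I \<in> pairs n"
  obtains i j where "I = {i, j}" "i < j" "i \<in> {1..n}" "j \<in> {1..n}" "Min I = i" "Max I = j"
proof -
  from assms have "I \<subseteq> {1..n}" "card I = 2" by (auto simp: pairs_def)
  then obtain x y where xy: "I = {x, y}" "x \<noteq> y" by (auto simp: card_2_iff)
  show ?thesis
  proof (cases "x < y")
    case True then show ?thesis using that[of x y] xy \<open>I \<subseteq> {1..n}\<close> by auto
  next
    case False then have "y < x" using xy by auto
    then show ?thesis using that[of y x] xy \<open>I \<subseteq> {1..n}\<close> by auto
  qed
qed

lemma pairs_intro: "i < j \<Longrightarrow> i \<in> {1..n} \<Longrightarrow> j \<in> {1..n} \<Longrightarrow> {i, j} \<in> pairs n"
  by (auto simp: pairs_def)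

lemma minor_pair: "i < j \<Longrightarrow> minor M {i, j} = det2 (M i) (M j)"
  by (simp add: minor_def min_def max_def)

lemma det2_swap: "det2 v w = - det2 w v" by (simp add: det2_def)
lemma det2_self: "det2 v v = 0" by (simp add: det2_def)

lemma Mat_tnz_det:
  assumes "M \<in> Mat_tnz n" "i \<in> {1..n}" "j \<in> {1..n}" "i \<noteq> j"
  shows "det2 (M i) (M j) \<noteq> 0"
proof (cases "i < j")
  case True
  then show ?thesis using assms pairs_intro[OF True, of n] minor_pair[OF True, of M]
    by (auto simp: Mat_tnz_def)
next
  case False
  then have "j < i" using assms by auto
  then show ?thesis using assms pairs_intro[OF \<open>j < i\<close>, of n] minor_pair[OF \<open>j < i\<close>, of M]
    by (auto simp: Mat_tnz_def det2_swap[of "M i"])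
qed

lemma Mat_tnzI:
  assumes "\<And>i. i \<notin> {1..n} \<Longrightarrow> M i = (0,0)"
    and "\<And>i j. i \<in> {1..n} \<Longrightarrow> j \<in> {1..n} \<Longrightarrow> i < j \<Longrightarrow> det2 (M i) (M j) \<noteq> 0"
  shows "M \<in> Mat_tnz n"
  unfolding Mat_tnz_def
proof (safe)
  fix i assume "i \<notin> {1..n}" then show "M i = (0,0)" using assms(1) by auto
next
  fix I assume I: "I \<in> pairs n" "minor M I = 0"
  from I(1) obtain i j where "I = {i, j}" "i < j" "i \<in> {1..n}" "j \<in> {1..n}" "Min I = i" "Max I = j"
    by (rule pairs_elim)
  then show False using I(2) assms(2) by (auto simp: minor_def)
qed

definition Eset :: "nat \<Rightarrow> (nat \<Rightarrow> real) set" where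
  "Eset n = PiE {2..n} (\<lambda>_. {-1, 1})"

definition Perms :: "nat \<Rightarrow> (nat \<Rightarrow> nat) set" where
  "Perms n = {p. p permutes {2..n}}"

definition Qm :: "nat \<Rightarrow> (nat \<Rightarrow> real) \<Rightarrow> (nat \<Rightarrow> nat) \<Rightarrow> nat \<Rightarrow> nat \<Rightarrow> real" where
  "Qm n e p = (\<lambda>i j. if i \<in> {1..n} \<and> j \<in> {1..n} then
      (if i = j then 0 else if i = 1 then e j else if j = 1 then - e i
       else e i * e j * sgn (real (p j) - real (p i))) else 0)"

definition Mreal :: "nat \<Rightarrow> (nat \<Rightarrow> real) \<Rightarrow> (nat \<Rightarrow> nat) \<Rightarrow> nat \<Rightarrow> real \<times> real" where
  "Mreal n e p = (\<lambda>i. if i = 1 \<and> 1 \<le> n then (1, 0) else if i \<in> {2..n} then (- e i * real (p i), e i) else (0, 0))"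

lemma sgn_pm1: "e \<in> {-1, 1::real} \<Longrightarrow> sgn (e * x) = e * sgn x"
  by (auto simp: sgn_mult)

lemma Mreal_props:
  assumes "n \<ge> 2" "e \<in> Eset n" "p \<in> Perms n"
  shows "Mreal n e p \<in> Mat_tnz n" "orient n (Mreal n e p) = Qm n e p"
proof -
  have e: "\<And>i. i \<in> {2..n} \<Longrightarrow> e i \<in> {-1, 1}" using assms(2) by (auto simp: Eset_def)
  have pinj: "\<And>i j. i \<in> {2..n} \<Longrightarrow> j \<in> {2..n} \<Longrightarrow> i \<noteq> j \<Longrightarrow> p i \<noteq> p j"
    using assms(3) permutes_inj[of p "{2..n}"] unfolding Perms_def inj_def by blast
  have d: "det2 (Mreal n e p i) (Mreal n e p j) =
     (if i = j then 0 else if i = 1 then e j else if j = 1 then - e i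
       else e i * e j * (real (p j) - real (p i)))" if "i \<in> {1..n}" "j \<in> {1..n}" for i j
  proof -
    have "i \<noteq> 1 \<Longrightarrow> i \<in> {2..n}" "j \<noteq> 1 \<Longrightarrow> j \<in> {2..n}" using that by auto
    then show ?thesis using that assms(1) unfolding Mreal_def det2_def
      by (cases "i = j"; cases "i = 1"; cases "j = 1"; simp add: algebra_simps)
  qed
  show "Mreal n e p \<in> Mat_tnz n"
  proof (rule Mat_tnzI)
    fix i assume "i \<notin> {1..n}" then show "Mreal n e p i = (0,0)" by (auto simp: Mreal_def)
  next
    fix i j assume ij: "i \<in> {1..n}" "j \<in> {1..n}" "i < j"
    show "det2 (Mreal n e p i) (Mreal n e p j) \<noteq> 0"
    proof -
      have "j \<in> {2..n}" using ij by auto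
      moreover have "i \<noteq> 1 \<Longrightarrow> i \<in> {2..n}" using ij by auto
      ultimately show ?thesis using d[OF ij(1,2)] ij e[of i] e[of j] pinj[of i j] by auto
    qed
  qed
  show "orient n (Mreal n e p) = Qm n e p"
  proof (intro ext)
    fix i j
    show "orient n (Mreal n e p) i j = Qm n e p i j"
    proof (cases "i \<in> {1..n} \<and> j \<in> {1..n}")
      case True
      then have ij: "i \<in> {1..n}" "j \<in> {1..n}" by auto
      have "i \<noteq> 1 \<Longrightarrow> i \<in> {2..n}" "j \<noteq> 1 \<Longrightarrow> j \<in> {2..n}" using ij by auto
      then show ?thesis using d[OF ij] ij e[of i] e[of j]
        by (auto simp: orient_def Qm_def sgn_mult)
    qed (auto simp: orient_def Qm_def)
  qed
qed



definition rk :: "nat set \<Rightarrow> (nat \<Rightarrow> real) \<Rightarrow> nat \<Rightarrow> nat" where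
  "rk S f i = card {j \<in> S. f j < f i}"

lemma rk_mono:
  assumes "finite S" "i \<in> S" "j \<in> S" "f i < f j"
  shows "rk S f i < rk S f j"
proof -
  have "{k \<in> S. f k < f i} \<subset> {k \<in> S. f k < f j}"
    using assms by auto
  then show ?thesis unfolding rk_def by (rule psubset_card_mono[rotated]) (use assms in auto)
qed

lemma rk_le:
  assumes "finite S" "i \<in> S"
  shows "rk S f i < card S"
proof -
  have "{k \<in> S. f k < f i} \<subset> S" using assms by auto
  then show ?thesis unfolding rk_def using assms psubset_card_mono by blast
qed

definition rperm :: "nat \<Rightarrow> (nat \<Rightarrow> real) \<Rightarrow> nat \<Rightarrow> nat" where
  "rperm n f = (\<lambda>i. if i \<in> {2..n} then 2 + rk {2..n} f i else i)"

lemma rperm_props: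
  assumes "n \<ge> 2" "inj_on f {2..n}"
  shows "rperm n f \<in> Perms n"
    "\<And>i j. i \<in> {2..n} \<Longrightarrow> j \<in> {2..n} \<Longrightarrow>
        sgn (real (rperm n f j) - real (rperm n f i)) = sgn (f j - f i)"
proof -
  have mono: "rperm n f i < rperm n f j" if "i \<in> {2..n}" "j \<in> {2..n}" "f i < f j" for i j
    using rk_mono[of "{2..n}" i j f] that by (simp add: rperm_def)
  show sg: "sgn (real (rperm n f j) - real (rperm n f i)) = sgn (f j - f i)"
    if "i \<in> {2..n}" "j \<in> {2..n}" for i j
  proof (cases "i = j")
    case False
    then have "f i \<noteq> f j" using assms(2) that by (meson inj_onD)
    then consider "f i < f j" | "f j < f i" by linarith
    then show ?thesis
    proof cases
      case 1 then show ?thesis using mono[OF that 1] by simp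
    next
      case 2 then show ?thesis using mono[OF that(2,1) 2] by simp
    qed
  qed simp
  have inj: "inj_on (rperm n f) {2..n}"
  proof (rule inj_onI)
    fix i j assume ij: "i \<in> {2..n}" "j \<in> {2..n}" "rperm n f i = rperm n f j"
    show "i = j"
    proof (rule ccontr)
      assume "i \<noteq> j"
      then have "f i \<noteq> f j" using assms(2) ij by (meson inj_onD)
      then consider "f i < f j" | "f j < f i" by linarith
      then show False using mono ij by (cases; fastforce)
    qed
  qed
  have img: "rperm n f ` {2..n} \<subseteq> {2..n}"
  proof
    fix y assume "y \<in> rperm n f ` {2..n}"
    then obtain i where i: "i \<in> {2..n}" "y = rperm n f i" by auto
    have "rk {2..n} f i < card {2..n}" using rk_le[OF _ i(1)] by simp
    then show "y \<in> {2..n}" using i assms(1) by (simp add: rperm_def)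
  qed
  have "rperm n f ` {2..n} = {2..n}" using endo_inj_surj[OF _ img inj] by simp
  then have "bij_betw (rperm n f) {2..n} {2..n}" using inj by (simp add: bij_betw_def)
  then show "rperm n f \<in> Perms n" unfolding Perms_def
    by (auto intro!: bij_imp_permutes simp: rperm_def)
qed

lemma Ospace_sub:
  assumes "n \<ge> 2" "M \<in> Mat_tnz n"
  shows "\<exists>e \<in> Eset n. \<exists>p \<in> Perms n. orient n M = Qm n e p"
proof -
  define a where "a = fst (M 1)"
  define b where "b = snd (M 1)"
  have one: "1 \<in> {1..n}" using assms by auto
  have d0: "\<And>i. i \<in> {2..n} \<Longrightarrow> det2 (M 1) (M i) \<noteq> 0"
    using Mat_tnz_det[OF assms(2) one] by auto
  have ab: "a^2 + b^2 > 0"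
  proof -
    have "M 1 \<noteq> (0,0)" using d0[of 2] assms by (auto simp: det2_def)
    then have "a \<noteq> 0 \<or> b \<noteq> 0" by (auto simp: a_def b_def prod_eq_iff)
    then show ?thesis by (auto simp: sum_power2_gt_zero_iff)
  qed
  define e where "e = restrict (\<lambda>i. sgn (det2 (M 1) (M i))) {2..n}"
  have eE: "e \<in> Eset n" unfolding Eset_def e_def using d0 by (auto simp: sgn_real_def)
  have e_pm: "\<And>i. i \<in> {2..n} \<Longrightarrow> e i \<in> {-1, 1}" using eE by (auto simp: Eset_def)
  define u where "u i = (e i * fst (M i), e i * snd (M i))" for i
  define x where "x i = a * fst (u i) + b * snd (u i)" for i
  define y where "y i = det2 (M 1) (u i)" for i
  have ypos: "y i > 0" if "i \<in> {2..n}" for i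
  proof -
    have "y i = e i * det2 (M 1) (M i)" by (simp add: y_def u_def det2_def algebra_simps)
    also have "\<dots> = \<bar>det2 (M 1) (M i)\<bar>" using that by (simp add: e_def abs_sgn)
    finally show ?thesis using d0[OF that] by simp
  qed
  have key: "(a^2 + b^2) * det2 (u i) (u j) = x i * y j - y i * x j" for i j
    by (simp add: x_def y_def det2_def a_def b_def power2_eq_square algebra_simps)
  define f where "f i = - x i / y i" for i
  have du: "det2 (u i) (u j) = e i * e j * det2 (M i) (M j)" for i j
    by (simp add: u_def det2_def algebra_simps)
  have sg: "sgn (f j - f i) = e i * e j * sgn (det2 (M i) (M j))"
    if "i \<in> {2..n}" "j \<in> {2..n}" for i j
  proof -
    have "f j - f i = (x i * y j - y i * x j) / (y i * y j)"
      using ypos[OF that(1)] ypos[OF that(2)] by (simp add: f_def field_simps)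
    also have "\<dots> = (a^2 + b^2) * det2 (u i) (u j) / (y i * y j)" by (simp add: key)
    finally have "sgn (f j - f i) = sgn (det2 (u i) (u j))"
      using ab ypos[OF that(1)] ypos[OF that(2)] by (simp add: sgn_mult sgn_divide)
    then show ?thesis using du e_pm[OF that(1)] e_pm[OF that(2)] by (auto simp: sgn_mult)
  qed
  have finj: "inj_on f {2..n}"
  proof (rule inj_onI)
    fix i j assume ij: "i \<in> {2..n}" "j \<in> {2..n}" "f i = f j"
    show "i = j"
    proof (rule ccontr)
      assume "i \<noteq> j"
      then have "det2 (M i) (M j) \<noteq> 0" using Mat_tnz_det[OF assms(2)] ij by auto
      then have "sgn (det2 (M i) (M j)) \<noteq> 0" by (simp add: sgn_0_0)
      then show False using sg[OF ij(1,2)] ij(3) e_pm[OF ij(1)] e_pm[OF ij(2)] by auto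
    qed
  qed
  define p where "p = rperm n f"
  have pP: "p \<in> Perms n" using rperm_props(1)[OF assms(1) finj] by (simp add: p_def)
  have psg: "sgn (real (p j) - real (p i)) = sgn (f j - f i)" if "i \<in> {2..n}" "j \<in> {2..n}" for i j
    using rperm_props(2)[OF assms(1) finj that] by (simp add: p_def)
  have "orient n M = Qm n e p"
  proof (intro ext)
    fix i j
    show "orient n M i j = Qm n e p i j"
    proof (cases "i \<in> {1..n} \<and> j \<in> {1..n}")
      case True
      then have ij: "i \<in> {1..n}" "j \<in> {1..n}" by auto
      consider "i = j" | "i \<noteq> j" "i = 1" | "i \<noteq> j" "i \<noteq> 1" "j = 1" | "i \<noteq> j" "i \<noteq> 1" "j \<noteq> 1" by blast
      then show ?thesis
      proof cases
        case 1 then show ?thesis using ij by (simp add: orient_def Qm_def det2_self)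
      next
        case 2 then have "j \<in> {2..n}" using ij by auto
        then show ?thesis using 2 ij by (simp add: orient_def Qm_def e_def)
      next
        case 3 then have "i \<in> {2..n}" using ij by auto
        then show ?thesis using 3 ij by (simp add: orient_def Qm_def e_def det2_swap[of "M i"] sgn_minus)
      next
        case 4 then have i2: "i \<in> {2..n}" "j \<in> {2..n}" using ij by auto
        have "e i * e j * sgn (real (p j) - real (p i)) = e i * e j * (e i * e j * sgn (det2 (M i) (M j)))"
          using psg[OF i2] sg[OF i2] by simp
        also have "\<dots> = sgn (det2 (M i) (M j))" using e_pm[OF i2(1)] e_pm[OF i2(2)] by auto
        finally show ?thesis using 4 ij by (simp add: orient_def Qm_def)
      qed
    qed (auto simp: orient_def Qm_def)
  qed
  then show ?thesis using eE pP by blast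
qed



lemma perm_rank:
  assumes "p permutes {2..n}" "i \<in> {2..n}"
  shows "p i = 2 + card {j \<in> {2..n}. p j < p i}"
proof -
  have bij: "bij_betw p {2..n} {2..n}" using assms(1) by (rule permutes_imp_bij)
  have pi: "p i \<in> {2..n}" using permutes_in_image[OF assms(1)] assms(2) by simp
  have img: "p ` {j \<in> {2..n}. p j < p i} = {k \<in> {2..n}. k < p i}"
  proof
    show "p ` {j \<in> {2..n}. p j < p i} \<subseteq> {k \<in> {2..n}. k < p i}"
      using bij unfolding bij_betw_def by auto
    show "{k \<in> {2..n}. k < p i} \<subseteq> p ` {j \<in> {2..n}. p j < p i}"
    proof
      fix k assume k: "k \<in> {k \<in> {2..n}. k < p i}"
      then have "k \<in> p ` {2..n}" using bij unfolding bij_betw_def by auto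
      then obtain j where "j \<in> {2..n}" "k = p j" by auto
      then show "k \<in> p ` {j \<in> {2..n}. p j < p i}" using k by auto
    qed
  qed
  have inj: "inj_on p {j \<in> {2..n}. p j < p i}"
  proof (rule inj_on_subset[of p "{2..n}"])
    show "inj_on p {2..n}" using bij by (simp add: bij_betw_def)
  qed auto
  have "card {j \<in> {2..n}. p j < p i} = card {k \<in> {2..n}. k < p i}"
    using card_image[OF inj] img by simp
  also have "{k \<in> {2..n}. k < p i} = {2..<p i}"
    using pi by auto
  finally show ?thesis using pi by (simp del: One_nat_def) linarith
qed

lemma Qm_inj:
  assumes "n \<ge> 2" "e \<in> Eset n" "p \<in> Perms n" "e' \<in> Eset n" "p' \<in> Perms n"
    "Qm n e p = Qm n e' p'"
  shows "e = e' \<and> p = p'"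
proof -
  have ee: "e i = e' i" if "i \<in> {2..n}" for i
  proof -
    have "Qm n e p 1 i = Qm n e' p' 1 i" using assms(6) by simp
    then show ?thesis using that by (simp add: Qm_def)
  qed
  have "e = e'" using assms(2,4) unfolding Eset_def by (rule PiE_ext) (use ee in auto)
  have e_pm: "\<And>i. i \<in> {2..n} \<Longrightarrow> e i \<in> {-1, 1}" using assms(2) by (auto simp: Eset_def)
  have lt: "p j < p i \<longleftrightarrow> p' j < p' i" if "i \<in> {2..n}" "j \<in> {2..n}" for i j
  proof (cases "i = j")
    case False
    have "e j * e i * sgn (real (p i) - real (p j)) = e j * e i * sgn (real (p' i) - real (p' j))"
    proof -
      have "Qm n e p j i = Qm n e' p' j i" using assms(6) by simp
      then show ?thesis using that False ee[OF that(1)] ee[OF that(2)] by (simp add: Qm_def)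
    qed
    then have "sgn (real (p i) - real (p j)) = sgn (real (p' i) - real (p' j))"
      using e_pm[OF that(1)] e_pm[OF that(2)] by auto
    then have "0 < real (p i) - real (p j) \<longleftrightarrow> 0 < real (p' i) - real (p' j)"
      by (metis sgn_greater)
    then show ?thesis by linarith
  qed simp
  have pp: "p permutes {2..n}" "p' permutes {2..n}" using assms(3,5) by (auto simp: Perms_def)
  have "p i = p' i" for i
  proof (cases "i \<in> {2..n}")
    case True
    have "{j \<in> {2..n}. p j < p i} = {j \<in> {2..n}. p' j < p' i}" using lt[OF True] by auto
    then show ?thesis using perm_rank[OF pp(1) True] perm_rank[OF pp(2) True] by simp
  next
    case False then show ?thesis using pp by (simp add: permutes_not_in)
  qed
  then show ?thesis using \<open>e = e'\<close> by auto
qed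



lemma Ospace_eq:
  assumes "n \<ge> 2"
  shows "Ospace n = (\<lambda>(e, p). Qm n e p) ` (Eset n \<times> Perms n)"
proof
  show "Ospace n \<subseteq> (\<lambda>(e, p). Qm n e p) ` (Eset n \<times> Perms n)"
  proof
    fix Q assume "Q \<in> Ospace n"
    then obtain M where M: "M \<in> Mat_tnz n" "Q = orient n M" by (auto simp: Ospace_def)
    then obtain e p where "e \<in> Eset n" "p \<in> Perms n" "orient n M = Qm n e p"
      using Ospace_sub[OF assms M(1)] by blast
    then have "Q = (\<lambda>(e, p). Qm n e p) (e, p)" "(e, p) \<in> Eset n \<times> Perms n" using M(2) by simp_all
    then show "Q \<in> (\<lambda>(e, p). Qm n e p) ` (Eset n \<times> Perms n)" by (rule image_eqI)
  qed
  show "(\<lambda>(e, p). Qm n e p) ` (Eset n \<times> Perms n) \<subseteq> Ospace n"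
  proof
    fix Q assume "Q \<in> (\<lambda>(e, p). Qm n e p) ` (Eset n \<times> Perms n)"
    then obtain x where x: "x \<in> Eset n \<times> Perms n" "Q = (\<lambda>(e, p). Qm n e p) x" by (rule imageE)
    obtain e p where "x = (e, p)" by (cases x)
    then have ep: "e \<in> Eset n" "p \<in> Perms n" "Q = Qm n e p" using x by simp_all
    then have "Q = orient n (Mreal n e p)" using Mreal_props(2)[OF assms ep(1,2)] by simp
    then show "Q \<in> Ospace n" unfolding Ospace_def using Mreal_props(1)[OF assms ep(1,2)] by blast
  qed
qed

lemma card_Ospace:
  assumes "n \<ge> 2"
  shows "card (Ospace n) = 2 ^ (n - 1) * fact (n - 1)"
proof -
  have inj: "inj_on (\<lambda>(e, p). Qm n e p) (Eset n \<times> Perms n)"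
    using Qm_inj[OF assms] by (auto intro!: inj_onI)
  have cE: "card (Eset n) = 2 ^ (n - 1)"
    unfolding Eset_def by (simp add: card_PiE numeral_2_eq_2)
  have cP: "card (Perms n) = fact (n - 1)"
    unfolding Perms_def by (rule card_permutations) auto
  show ?thesis unfolding Ospace_eq[OF assms] card_image[OF inj] card_cartesian_product cE cP ..
qed

definition negQ :: "(nat \<Rightarrow> nat \<Rightarrow> real) \<Rightarrow> nat \<Rightarrow> nat \<Rightarrow> real" where
  "negQ Q = (\<lambda>i j. - Q i j)"

definition reflM :: "(nat \<Rightarrow> real \<times> real) \<Rightarrow> nat \<Rightarrow> real \<times> real" where
  "reflM M = (\<lambda>i. (fst (M i), - snd (M i)))"

lemma reflM_props:
  assumes "M \<in> Mat_tnz n"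
  shows "reflM M \<in> Mat_tnz n" "orient n (reflM M) = negQ (orient n M)"
    "\<And>I. minor (reflM M) I = - minor M I"
proof -
  have d: "det2 (reflM M i) (reflM M j) = - det2 (M i) (M j)" for i j
    by (simp add: reflM_def det2_def)
  show "reflM M \<in> Mat_tnz n" using assms unfolding Mat_tnz_def
    by (auto simp: minor_def d) (auto simp: reflM_def)
  show "orient n (reflM M) = negQ (orient n M)"
    by (intro ext) (simp add: orient_def negQ_def d sgn_minus)
  show "\<And>I. minor (reflM M) I = - minor M I" by (simp add: minor_def d)
qed

lemma Ospace_neg: assumes "Q \<in> Ospace n" shows "negQ Q \<in> Ospace n"
proof -
  from assms obtain M where M: "M \<in> Mat_tnz n" "Q = orient n M" by (auto simp: Ospace_def)
  then have "negQ Q = orient n (reflM M)" using reflM_props(2)[OF M(1)] by simp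
  then show ?thesis using reflM_props(1)[OF M(1)] unfolding Ospace_def by blast
qed

lemma Ospace_nz:
  assumes "n \<ge> 2" "Q \<in> Ospace n"
  shows "Q 1 2 \<noteq> 0"
proof -
  obtain M where M: "M \<in> Mat_tnz n" "Q = orient n M" using assms(2) by (auto simp: Ospace_def)
  then show ?thesis using Mat_tnz_det[OF M(1), of 1 2] assms(1) by (simp add: orient_def sgn_eq_0_iff)
qed

lemma negQ_negQ: "negQ (negQ Q) = Q" by (simp add: negQ_def)
lemma negQ_inj: "negQ Q = negQ R \<longleftrightarrow> Q = R"
proof
  assume "negQ Q = negQ R"
  then have "negQ (negQ Q) = negQ (negQ R)" by simp
  then show "Q = R" by (simp add: negQ_negQ)
qed simp

lemma Ospace_orbits_eq: "Ospace_orbits n = (\<lambda>Q. {Q, negQ Q}) ` Ospace n"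
  unfolding Ospace_orbits_def negQ_def by blast

lemma card_orbits:
  assumes "n \<ge> 2"
  shows "card (Ospace_orbits n) = 2 ^ (n - 2) * fact (n - 1)"
proof -
  have fin: "finite (Ospace n)"
  proof -
    have "finite (Eset n)" unfolding Eset_def by (simp add: finite_PiE)
    moreover have "finite (Perms n)" unfolding Perms_def by (simp add: finite_permutations)
    ultimately show ?thesis unfolding Ospace_eq[OF assms] by simp
  qed
  have U: "\<Union>(Ospace_orbits n) = Ospace n"
    unfolding Ospace_orbits_eq using Ospace_neg by auto
  have h1: "finite (Ospace_orbits n)" unfolding Ospace_orbits_eq using fin by simp
  have h2: "finite (\<Union>(Ospace_orbits n))" using U fin by simp
  have h3: "card c = 2" if "c \<in> Ospace_orbits n" for c
  proof -
    from that obtain Q where Q: "Q \<in> Ospace n" "c = {Q, negQ Q}" unfolding Ospace_orbits_eq by auto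
    have "Q \<noteq> negQ Q"
    proof
      assume "Q = negQ Q"
      then have "Q 1 2 = negQ Q 1 2" by simp
      then have "Q 1 2 = - Q 1 2" by (simp add: negQ_def)
      then show False using Ospace_nz[OF assms Q(1)] by simp
    qed
    then show "card c = 2" using Q by simp
  qed
  have h4: "c1 \<inter> c2 = {}" if "c1 \<in> Ospace_orbits n" "c2 \<in> Ospace_orbits n" "c1 \<noteq> c2" for c1 c2
  proof -
    from that obtain Q R where Q: "Q \<in> Ospace n" "c1 = {Q, negQ Q}" and R: "R \<in> Ospace n" "c2 = {R, negQ R}"
      unfolding Ospace_orbits_eq by auto
    show ?thesis
    proof (rule ccontr)
      assume "c1 \<inter> c2 \<noteq> {}"
      then obtain X where X: "X \<in> c1" "X \<in> c2" by blast
      have RX: "R = X \<or> R = negQ X"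
      proof -
        have "X = R \<or> X = negQ R" using X(2) R(2) by blast
        then show ?thesis
        proof
          assume "X = negQ R" then have "negQ X = R" using negQ_negQ[of R] by simp
          then show ?thesis by simp
        qed simp
      qed
      have XQ: "X = Q \<or> X = negQ Q" using X(1) Q(2) by blast
      have "R = Q \<or> R = negQ Q" using RX XQ negQ_negQ[of Q] by blast
      then have "c1 = c2"
      proof
        assume "R = Q" then show ?thesis using Q(2) R(2) by simp
      next
        assume "R = negQ Q" then show ?thesis using Q(2) R(2) negQ_negQ[of Q] by auto
      qed
      then show False using that(3) by simp
    qed
  qed
  have "2 * card (Ospace_orbits n) = card (\<Union>(Ospace_orbits n))"
    by (rule card_partition) (use h1 h2 h3 h4 in auto)
  then have "2 * card (Ospace_orbits n) = 2 ^ (n - 1) * fact (n - 1)" using U card_Ospace[OF assms] by simp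
  moreover have "(2::nat) ^ (n - 1) = 2 * 2 ^ (n - 2)"
  proof -
    have "n - 1 = Suc (n - 2)" using assms by simp
    then show ?thesis by (simp only: power_Suc)
  qed
  ultimately show ?thesis by simp
qed



lemma gl_det: "det2 (gl_act (a, b, c, d) M i) (gl_act (a, b, c, d) M j) = (a * d - b * c) * det2 (M i) (M j)"
  by (simp add: gl_act_def det2_def algebra_simps)

lemma minor_gl: "minor (gl_act (a, b, c, d) M) I = (a * d - b * c) * minor M I"
  by (simp add: minor_def gl_det)

lemma gl_Mat:
  assumes "A \<in> GL2" "M \<in> Mat_tnz n"
  shows "gl_act A M \<in> Mat_tnz n"
proof -
  obtain a b c d where A: "A = (a, b, c, d)" by (cases A) auto
  have dA: "a * d \<noteq> b * c" using assms(1) A by (simp add: GL2_def)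
  show ?thesis using assms(2) dA unfolding Mat_tnz_def A
    by (auto simp: minor_gl) (auto simp: gl_act_def)
qed

lemma gl_id: "gl_act (1, 0, 0, 1) M = M"
  by (simp add: gl_act_def)

lemma gl_orbit_self: "M \<in> gl_orbit M"
proof -
  have "(1, 0, 0, 1) \<in> GL2" by (simp add: GL2_def)
  then show ?thesis unfolding gl_orbit_def using gl_id[of M] by force
qed

lemma Gr_mem:
  assumes "X \<in> Gr_tnz n" "M \<in> X"
  shows "M \<in> Mat_tnz n"
proof -
  obtain M0 where M0: "M0 \<in> Mat_tnz n" "X = gl_orbit M0" using assms(1) by (auto simp: Gr_tnz_def)
  then obtain A where "A \<in> GL2" "M = gl_act A M0" using assms(2) by (auto simp: gl_orbit_def)
  then show ?thesis using gl_Mat M0(1) by simp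
qed

definition posS :: "nat \<Rightarrow> (nat \<Rightarrow> real \<times> real) \<Rightarrow> nat set set" where
  "posS n M = {I \<in> pairs n. minor M I > 0}"

lemma minor_nz: "M \<in> Mat_tnz n \<Longrightarrow> I \<in> pairs n \<Longrightarrow> minor M I \<noteq> 0"
  by (simp add: Mat_tnz_def)

lemma stratum_compl: "stratum n C = stratum n (pairs n - C)"
proof -
  have key: "(\<forall>I \<in> pairs n. minor M I > 0 \<longleftrightarrow> I \<in> C) \<longleftrightarrow> (\<forall>I \<in> pairs n. minor M I < 0 \<longleftrightarrow> I \<in> pairs n - C)"
    "(\<forall>I \<in> pairs n. minor M I < 0 \<longleftrightarrow> I \<in> C) \<longleftrightarrow> (\<forall>I \<in> pairs n. minor M I > 0 \<longleftrightarrow> I \<in> pairs n - C)"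
    if "M \<in> Mat_tnz n" for M
  proof -
    have nz: "\<And>I. I \<in> pairs n \<Longrightarrow> minor M I \<noteq> 0" using minor_nz[OF that] by blast
    show "(\<forall>I \<in> pairs n. minor M I > 0 \<longleftrightarrow> I \<in> C) \<longleftrightarrow> (\<forall>I \<in> pairs n. minor M I < 0 \<longleftrightarrow> I \<in> pairs n - C)"
      using nz by (meson Diff_iff linorder_neqE_linordered_idom not_less_iff_gr_or_eq)
    show "(\<forall>I \<in> pairs n. minor M I < 0 \<longleftrightarrow> I \<in> C) \<longleftrightarrow> (\<forall>I \<in> pairs n. minor M I > 0 \<longleftrightarrow> I \<in> pairs n - C)"
      using nz by (meson Diff_iff linorder_neqE_linordered_idom not_less_iff_gr_or_eq)
  qed
  show ?thesis
  proof (intro equalityI subsetI)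
      fix X assume "X \<in> stratum n C"
      then obtain M where X: "X \<in> Gr_tnz n" "M \<in> X"
        "(\<forall>I \<in> pairs n. minor M I > 0 \<longleftrightarrow> I \<in> C) \<or> (\<forall>I \<in> pairs n. minor M I < 0 \<longleftrightarrow> I \<in> C)"
        unfolding stratum_def by blast
      have "M \<in> Mat_tnz n" using X(1,2) by (rule Gr_mem)
      then show "X \<in> stratum n (pairs n - C)" using X key unfolding stratum_def by blast
    next
      fix X assume "X \<in> stratum n (pairs n - C)"
      then obtain M where X: "X \<in> Gr_tnz n" "M \<in> X"
        "(\<forall>I \<in> pairs n. minor M I > 0 \<longleftrightarrow> I \<in> pairs n - C) \<or> (\<forall>I \<in> pairs n. minor M I < 0 \<longleftrightarrow> I \<in> pairs n - C)"
        unfolding stratum_def by blast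
      have "M \<in> Mat_tnz n" using X(1,2) by (rule Gr_mem)
      then show "X \<in> stratum n C" using X key unfolding stratum_def by blast
  qed
qed

lemma pos_gl:
  assumes "A \<in> GL2" "M \<in> Mat_tnz n"
  shows "posS n (gl_act A M) = posS n M \<or> posS n (gl_act A M) = pairs n - posS n M"
proof -
  obtain a b c d where A: "A = (a, b, c, d)" by (cases A) auto
  have dA: "a * d - b * c \<noteq> 0" using assms(1) A by (simp add: GL2_def)
  have nz: "\<And>I. I \<in> pairs n \<Longrightarrow> minor M I \<noteq> 0" using minor_nz[OF assms(2)] by blast
  show ?thesis
  proof (cases "a * d - b * c > 0")
    case True
    then have "posS n (gl_act A M) = posS n M"
      unfolding posS_def A minor_gl by (auto simp: zero_less_mult_iff)
    then show ?thesis by simp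
  next
    case False
    then have neg: "a * d - b * c < 0" using dA by linarith
    have "posS n (gl_act A M) = pairs n - posS n M"
      unfolding posS_def A minor_gl using neg nz by (auto simp: zero_less_mult_iff linorder_neq_iff)
    then show ?thesis by simp
  qed
qed

lemma strat_pattern:
  assumes "gl_orbit M \<in> stratum n C" "M \<in> Mat_tnz n"
  shows "C \<inter> pairs n = posS n M \<or> C \<inter> pairs n = pairs n - posS n M"
proof -
  obtain M' where M': "M' \<in> gl_orbit M"
    "(\<forall>I \<in> pairs n. minor M' I > 0 \<longleftrightarrow> I \<in> C) \<or> (\<forall>I \<in> pairs n. minor M' I < 0 \<longleftrightarrow> I \<in> C)"
    using assms(1) unfolding stratum_def by blast
  obtain A where A: "A \<in> GL2" "M' = gl_act A M" using M'(1) by (auto simp: gl_orbit_def)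
  have M'm: "M' \<in> Mat_tnz n" using gl_Mat[OF A(1) assms(2)] A(2) by simp
  have nz: "\<And>I. I \<in> pairs n \<Longrightarrow> minor M' I \<noteq> 0" using minor_nz[OF M'm] by blast
  have "C \<inter> pairs n = posS n M' \<or> C \<inter> pairs n = pairs n - posS n M'"
    using M'(2)
  proof
    assume H: "\<forall>I \<in> pairs n. minor M' I > 0 \<longleftrightarrow> I \<in> C"
    have "C \<inter> pairs n = posS n M'" unfolding posS_def using H by auto
    then show ?thesis by simp
  next
    assume H: "\<forall>I \<in> pairs n. minor M' I < 0 \<longleftrightarrow> I \<in> C"
    have "C \<inter> pairs n = pairs n - posS n M'" unfolding posS_def using H nz
      by (auto simp: not_less less_le)
    then show ?thesis by simp
  qed
  moreover have "posS n M' = posS n M \<or> posS n M' = pairs n - posS n M"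
    using pos_gl[OF A(1) assms(2)] A(2) by simp
  moreover have "posS n M \<subseteq> pairs n" by (auto simp: posS_def)
  ultimately show ?thesis by blast
qed

definition hS :: "nat \<Rightarrow> (nat \<Rightarrow> nat \<Rightarrow> real) \<Rightarrow> (nat \<Rightarrow> real \<times> real) set set" where
  "hS n Q = stratum n {I \<in> pairs n. Q (Min I) (Max I) > 0}"

lemma posQ:
  assumes "M \<in> Mat_tnz n"
  shows "{I \<in> pairs n. orient n M (Min I) (Max I) > 0} = posS n M"
proof -
  have "orient n M (Min I) (Max I) > 0 \<longleftrightarrow> minor M I > 0" if I: "I \<in> pairs n" for I
  proof -
    obtain i j where "I = {i, j}" "i < j" "i \<in> {1..n}" "j \<in> {1..n}" "Min I = i" "Max I = j"
      using I by (rule pairs_elim)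
    then show ?thesis by (simp add: orient_def minor_def sgn_greater)
  qed
  then show ?thesis unfolding posS_def by blast
qed

lemma hS_orient: "M \<in> Mat_tnz n \<Longrightarrow> hS n (orient n M) = stratum n (posS n M)"
  by (simp add: hS_def posQ)

lemma orbit_in_stratum:
  assumes "M \<in> Mat_tnz n"
  shows "gl_orbit M \<in> stratum n (posS n M)"
proof -
  have "gl_orbit M \<in> Gr_tnz n" using assms by (simp add: Gr_tnz_def)
  moreover have "\<forall>I \<in> pairs n. minor M I > 0 \<longleftrightarrow> I \<in> posS n M" by (simp add: posS_def)
  ultimately show ?thesis unfolding stratum_def using gl_orbit_self[of M] by blast
qed

lemma orient_sigma:
  assumes "M \<in> Mat_tnz n" "M' \<in> Mat_tnz n" "s = 1 \<or> s = -1"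
    "\<And>i j. i < j \<Longrightarrow> i \<in> {1..n} \<Longrightarrow> j \<in> {1..n} \<Longrightarrow> sgn (det2 (M' i) (M' j)) = s * sgn (det2 (M i) (M j))"
  shows "orient n M' = (\<lambda>i j. s * orient n M i j)"
proof (intro ext)
  fix i j
  show "orient n M' i j = s * orient n M i j"
  proof (cases "i \<in> {1..n} \<and> j \<in> {1..n}")
    case True
    consider "i < j" | "i = j" | "j < i" by linarith
    then show ?thesis
    proof cases
      case 1
      have "orient n M' i j = sgn (det2 (M' i) (M' j))" "orient n M i j = sgn (det2 (M i) (M j))"
        using True by (simp_all add: orient_def)
      then show ?thesis using True assms(4)[OF 1] by simp
    next
      case 2 then show ?thesis using True by (simp add: orient_def det2_self)
    next
      case 3
      have "orient n M' i j = - sgn (det2 (M' j) (M' i))" "orient n M i j = - sgn (det2 (M j) (M i))"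
        using True by (simp_all add: orient_def det2_swap[of "M' i"] det2_swap[of "M i"] sgn_minus)
      then show ?thesis using True assms(4)[OF 3] by simp
    qed
  next
    case False
    have "orient n M' i j = 0" "orient n M i j = 0" using False unfolding orient_def by auto
    then show ?thesis by simp
  qed
qed

lemma orient_from_pos:
  assumes "M \<in> Mat_tnz n" "M' \<in> Mat_tnz n"
  shows "posS n M' = posS n M \<Longrightarrow> orient n M' = orient n M"
    and "posS n M' = pairs n - posS n M \<Longrightarrow> orient n M' = negQ (orient n M)"
proof -
  have d: "\<And>i j. i < j \<Longrightarrow> i \<in> {1..n} \<Longrightarrow> j \<in> {1..n} \<Longrightarrow>
      det2 (M i) (M j) \<noteq> 0 \<and> det2 (M' i) (M' j) \<noteq> 0 \<and> {i, j} \<in> pairs n \<and>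
      minor M {i, j} = det2 (M i) (M j) \<and> minor M' {i, j} = det2 (M' i) (M' j)"
    using Mat_tnz_det[OF assms(1)] Mat_tnz_det[OF assms(2)] pairs_intro minor_pair by auto
  {
    assume H: "posS n M' = posS n M"
    have "orient n M' = (\<lambda>i j. 1 * orient n M i j)"
    proof (rule orient_sigma[OF assms])
      fix i j assume ij: "i < j" "i \<in> {1..n}" "j \<in> {1..n}"
      have "{i, j} \<in> posS n M' \<longleftrightarrow> {i, j} \<in> posS n M" using H by simp
      then have "det2 (M' i) (M' j) > 0 \<longleftrightarrow> det2 (M i) (M j) > 0" using d[OF ij] by (simp add: posS_def)
      then show "sgn (det2 (M' i) (M' j)) = 1 * sgn (det2 (M i) (M j))"
        using d[OF ij] by (auto simp: sgn_real_def)
    qed simp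
    then show "orient n M' = orient n M" by simp
  }
  {
    assume H: "posS n M' = pairs n - posS n M"
    have "orient n M' = (\<lambda>i j. (-1) * orient n M i j)"
    proof (rule orient_sigma[OF assms])
      fix i j assume ij: "i < j" "i \<in> {1..n}" "j \<in> {1..n}"
      have "{i, j} \<in> posS n M' \<longleftrightarrow> {i, j} \<notin> posS n M" using H d[OF ij] by simp
      then have "det2 (M' i) (M' j) > 0 \<longleftrightarrow> \<not> det2 (M i) (M j) > 0" using d[OF ij] by (simp add: posS_def)
      then show "sgn (det2 (M' i) (M' j)) = (-1) * sgn (det2 (M i) (M j))"
        using d[OF ij] by (auto simp: sgn_real_def)
    qed simp
    then show "orient n M' = negQ (orient n M)" by (simp add: negQ_def)
  }
qed

lemma strata_eq: "strata n = hS n ` Ospace n"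
proof (intro equalityI subsetI)
  fix S assume "S \<in> strata n"
  then obtain C where C: "S = stratum n C" "C \<subseteq> pairs n" "stratum n C \<noteq> {}"
    unfolding strata_def by blast
  then obtain X where X: "X \<in> stratum n C" by blast
  then have "X \<in> Gr_tnz n" by (simp add: stratum_def)
  then obtain M where M: "M \<in> Mat_tnz n" "X = gl_orbit M" by (auto simp: Gr_tnz_def)
  have "C \<inter> pairs n = posS n M \<or> C \<inter> pairs n = pairs n - posS n M"
    using strat_pattern[of M n C] X M by simp
  then have "C = posS n M \<or> C = pairs n - posS n M" using C(2) by (simp add: Int_absorb2)
  then have "S = stratum n (posS n M)" using C(1) stratum_compl[of n "posS n M"] by auto
  then have "S = hS n (orient n M)" using hS_orient[OF M(1)] by simp
  then show "S \<in> hS n ` Ospace n" using M(1) unfolding Ospace_def by blast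
next
  fix S assume "S \<in> hS n ` Ospace n"
  then obtain M where M: "M \<in> Mat_tnz n" "S = hS n (orient n M)" unfolding Ospace_def by blast
  then have S: "S = stratum n (posS n M)" using hS_orient by simp
  have "stratum n (posS n M) \<noteq> {}" using orbit_in_stratum[OF M(1)] by blast
  moreover have "posS n M \<subseteq> pairs n" by (auto simp: posS_def)
  ultimately show "S \<in> strata n" unfolding strata_def S by blast
qed

lemma posS_refl:
  assumes "M \<in> Mat_tnz n"
  shows "posS n (reflM M) = pairs n - posS n M"
proof -
  have "\<And>I. I \<in> pairs n \<Longrightarrow> minor M I \<noteq> 0" using minor_nz[OF assms] by blast
  then show ?thesis unfolding posS_def reflM_props(3)[OF assms] by (auto simp: linorder_neq_iff)
qed

lemma hS_iff:
  assumes "Q \<in> Ospace n" "R \<in> Ospace n"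
  shows "hS n Q = hS n R \<longleftrightarrow> {Q, negQ Q} = {R, negQ R}"
proof -
  obtain M where M: "M \<in> Mat_tnz n" "Q = orient n M" using assms(1) by (auto simp: Ospace_def)
  obtain M' where M': "M' \<in> Mat_tnz n" "R = orient n M'" using assms(2) by (auto simp: Ospace_def)
  show ?thesis
  proof
    assume H: "hS n Q = hS n R"
    then have "stratum n (posS n M) = stratum n (posS n M')" using M M' hS_orient by simp
    then have "gl_orbit M \<in> stratum n (posS n M')" using orbit_in_stratum[OF M(1)] by simp
    then have "posS n M' \<inter> pairs n = posS n M \<or> posS n M' \<inter> pairs n = pairs n - posS n M"
      using strat_pattern M(1) by blast
    moreover have "posS n M' \<inter> pairs n = posS n M'" by (auto simp: posS_def)
    ultimately have "R = Q \<or> R = negQ Q" using orient_from_pos[OF M(1) M'(1)] M(2) M'(2) by auto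
    then show "{Q, negQ Q} = {R, negQ R}" using negQ_negQ[of Q] by auto
  next
    assume H: "{Q, negQ Q} = {R, negQ R}"
    then have "R = Q \<or> R = negQ Q" by (metis doubleton_eq_iff)
    then show "hS n Q = hS n R"
    proof
      assume "R = negQ Q"
      then have "R = orient n (reflM M)" using reflM_props(2)[OF M(1)] M(2) by simp
      then have "hS n R = stratum n (pairs n - posS n M)"
        using hS_orient[OF reflM_props(1)[OF M(1)]] posS_refl[OF M(1)] by simp
      also have "\<dots> = hS n Q" using stratum_compl[of n "posS n M"] hS_orient[OF M(1)] M(2) by simp
      finally show ?thesis by simp
    qed simp
  qed
qed

lemma bij_quot:
  assumes "\<And>x y. x \<in> A \<Longrightarrow> y \<in> A \<Longrightarrow> h x = h y \<longleftrightarrow> k x = k y"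
  shows "bij_betw (\<lambda>z. k (inv_into A h z)) (h ` A) (k ` A)"
proof -
  have inv: "inv_into A h (h x) \<in> A" "h (inv_into A h (h x)) = h x" if "x \<in> A" for x
    using that by (auto simp: inv_into_into f_inv_into_f)
  show ?thesis
  proof (rule bij_betw_imageI)
    show "inj_on (\<lambda>z. k (inv_into A h z)) (h ` A)"
    proof (rule inj_onI)
      fix z1 z2 assume z: "z1 \<in> h ` A" "z2 \<in> h ` A" "k (inv_into A h z1) = k (inv_into A h z2)"
      then obtain x1 x2 where x: "x1 \<in> A" "x2 \<in> A" "z1 = h x1" "z2 = h x2" by auto
      then have "h (inv_into A h z1) = h (inv_into A h z2)"
        using assms[OF inv(1)[OF x(1)] inv(1)[OF x(2)]] z(3) by simp
      then show "z1 = z2" using inv(2)[OF x(1)] inv(2)[OF x(2)] x by simp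
    qed
    show "(\<lambda>z. k (inv_into A h z)) ` h ` A = k ` A"
    proof (intro equalityI subsetI)
      fix w assume "w \<in> (\<lambda>z. k (inv_into A h z)) ` h ` A"
      then obtain x where x: "x \<in> A" "w = k (inv_into A h (h x))" by auto
      then have "w = k x" using assms[OF inv(1)[OF x(1)] x(1)] inv(2)[OF x(1)] by simp
      then show "w \<in> k ` A" using x(1) by blast
    next
      fix w assume "w \<in> k ` A"
      then obtain x where x: "x \<in> A" "w = k x" by auto
      then have "w = k (inv_into A h (h x))" using assms[OF inv(1)[OF x(1)] x(1)] inv(2)[OF x(1)] by simp
      then show "w \<in> (\<lambda>z. k (inv_into A h z)) ` h ` A" using x(1) by blast
    qed
  qed
qed

lemma strata_bij:
  "bij_betw (\<lambda>z. (\<lambda>Q. {Q, negQ Q}) (inv_into (Ospace n) (hS n) z)) (strata n) (Ospace_orbits n)"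
  unfolding strata_eq Ospace_orbits_eq by (rule bij_quot) (rule hS_iff)

lemma card_strata:
  assumes "n \<ge> 2"
  shows "card (strata n) = 2 ^ (n - 2) * fact (n - 1)"
  using bij_betw_same_card[OF strata_bij[of n]] card_orbits[OF assms] by simp



lemma SP_simps [simp]: "carrier (SP n) = Pn n" "monoid.mult (SP n) = sp_mult n" "monoid.one (SP n) = sp_one n"
  by (simp_all add: SP_def)

lemma Pn_val:
  assumes "a \<in> Pn n" "i \<in> {1..n}"
  shows "nat \<bar>a i\<bar> \<in> {1..n}" "a i \<noteq> 0" "int (nat \<bar>a i\<bar>) = \<bar>a i\<bar>"
proof -
  have "bij_betw (\<lambda>i. nat \<bar>a i\<bar>) {1..n} {1..n}" using assms(1) by (simp add: Pn_def)
  then show 1: "nat \<bar>a i\<bar> \<in> {1..n}" using assms(2) by (auto simp: bij_betw_def)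
  then show "a i \<noteq> 0" by auto
  show "int (nat \<bar>a i\<bar>) = \<bar>a i\<bar>" by simp
qed

lemma Pn_out: "a \<in> Pn n \<Longrightarrow> i \<notin> {1..n} \<Longrightarrow> a i = 0"
  by (simp add: Pn_def)

lemma abs_sgn_mult: "(x::int) \<noteq> 0 \<Longrightarrow> \<bar>sgn x * y\<bar> = \<bar>y\<bar>"
  by (simp add: abs_mult abs_sgn_eq)

lemma sp_mult_closed:
  assumes "a \<in> Pn n" "b \<in> Pn n"
  shows "sp_mult n a b \<in> Pn n"
proof -
  have ba: "bij_betw (\<lambda>i. nat \<bar>a i\<bar>) {1..n} {1..n}" "bij_betw (\<lambda>i. nat \<bar>b i\<bar>) {1..n} {1..n}"
    using assms by (simp_all add: Pn_def)
  have comp: "bij_betw ((\<lambda>i. nat \<bar>a i\<bar>) \<circ> (\<lambda>i. nat \<bar>b i\<bar>)) {1..n} {1..n}"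
    using ba(2) ba(1) by (rule bij_betw_trans)
  have "bij_betw (\<lambda>i. nat \<bar>sp_mult n a b i\<bar>) {1..n} {1..n}"
  proof (rule bij_betw_cong[THEN iffD2, OF _ comp])
    fix i assume i: "i \<in> {1..n}"
    have "b i \<noteq> 0" using Pn_val(2)[OF assms(2) i] .
    then show "nat \<bar>sp_mult n a b i\<bar> = ((\<lambda>i. nat \<bar>a i\<bar>) \<circ> (\<lambda>i. nat \<bar>b i\<bar>)) i"
      using i by (simp add: sp_mult_def abs_sgn_mult)
  qed
  then show ?thesis by (simp add: Pn_def sp_mult_def)
qed

lemma sp_one_in: "sp_one n \<in> Pn n"
proof -
  have "bij_betw (\<lambda>i. nat \<bar>sp_one n i\<bar>) {1..n} {1..n}"
    by (rule bij_betw_cong[THEN iffD2, of _ _ id]) (auto simp: sp_one_def)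
  then show ?thesis by (simp add: Pn_def sp_one_def)
qed

lemma group_SP: "group (SP n)"
proof (rule groupI)
  fix x y assume "x \<in> carrier (SP n)" "y \<in> carrier (SP n)"
  then show "x \<otimes>\<^bsub>SP n\<^esub> y \<in> carrier (SP n)" by (simp add: sp_mult_closed)
next
  show "\<one>\<^bsub>SP n\<^esub> \<in> carrier (SP n)" by (simp add: sp_one_in)
next
  fix x y z assume xyz: "x \<in> carrier (SP n)" "y \<in> carrier (SP n)" "z \<in> carrier (SP n)"
  show "x \<otimes>\<^bsub>SP n\<^esub> y \<otimes>\<^bsub>SP n\<^esub> z = x \<otimes>\<^bsub>SP n\<^esub> (y \<otimes>\<^bsub>SP n\<^esub> z)"
  proof (simp, intro ext)
    fix i
    show "sp_mult n (sp_mult n x y) z i = sp_mult n x (sp_mult n y z) i"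
    proof (cases "i \<in> {1..n}")
      case True
      have zi: "nat \<bar>z i\<bar> \<in> {1..n}" "z i \<noteq> 0" using Pn_val[of z n i] xyz True by auto
      then show ?thesis using True by (simp add: sp_mult_def abs_sgn_mult sgn_mult)
    next
      case False then show ?thesis by (simp only: sp_mult_def if_not_P[OF False] if_False)
    qed
  qed
next
  fix x assume x: "x \<in> carrier (SP n)"
  show "\<one>\<^bsub>SP n\<^esub> \<otimes>\<^bsub>SP n\<^esub> x = x"
  proof (simp, intro ext)
    fix i
    show "sp_mult n (sp_one n) x i = x i"
    proof (cases "i \<in> {1..n}")
      case True
      have "nat \<bar>x i\<bar> \<in> {1..n}" using Pn_val[of x n i] x True by auto
      then show ?thesis using True by (simp add: sp_mult_def sp_one_def sgn_mult_abs)
    next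
      case False
      have "x i = 0" using Pn_out[of x n i] x False by simp
      then show ?thesis by (simp only: sp_mult_def if_not_P[OF False])
    qed
  qed
next
  fix x assume x: "x \<in> carrier (SP n)"
  then have xP: "x \<in> Pn n" by simp
  define p where "p = (\<lambda>i. nat \<bar>x i\<bar>)"
  have bp: "bij_betw p {1..n} {1..n}" using xP by (simp add: Pn_def p_def)
  define q where "q = inv_into {1..n} p"
  have bq: "bij_betw q {1..n} {1..n}" using bp by (simp add: q_def bij_betw_inv_into)
  define y where "y = (\<lambda>j. if j \<in> {1..n} then sgn (x (q j)) * int (q j) else 0)"
  have qx: "q j \<in> {1..n}" if "j \<in> {1..n}" for j using bq that by (auto simp: bij_betw_def)
  have yP: "y \<in> Pn n"
  proof -
    have "bij_betw (\<lambda>j. nat \<bar>y j\<bar>) {1..n} {1..n}"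
    proof (rule bij_betw_cong[THEN iffD2, OF _ bq])
      fix j assume j: "j \<in> {1..n}"
      have "x (q j) \<noteq> 0" using Pn_val(2)[OF xP qx[OF j]] .
      then show "nat \<bar>y j\<bar> = q j" using j by (simp add: y_def abs_mult abs_sgn_eq)
    qed
    then show ?thesis by (simp add: Pn_def y_def)
  qed
  have yx: "sp_mult n y x = sp_one n"
  proof (intro ext)
    fix i
    show "sp_mult n y x i = sp_one n i"
    proof (cases "i \<in> {1..n}")
      case True
      have pi: "p i \<in> {1..n}" using Pn_val(1)[OF xP True] by (simp add: p_def)
      have "q (p i) = i" using bp True by (simp add: q_def bij_betw_inv_into_left)
      then have "sp_mult n y x i = sgn (x i) * (sgn (x i) * int i)"
        using pi True by (simp add: sp_mult_def y_def p_def)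
      also have "\<dots> = int i" using Pn_val(2)[OF xP True] by (simp add: sgn_if)
      finally show ?thesis using True by (simp add: sp_one_def)
    next
      case False then show ?thesis by (simp only: sp_mult_def sp_one_def if_not_P[OF False] if_False)
    qed
  qed
  show "\<exists>y\<in>carrier (SP n). y \<otimes>\<^bsub>SP n\<^esub> x = \<one>\<^bsub>SP n\<^esub>"
  proof (rule bexI[of _ y])
    show "y \<otimes>\<^bsub>SP n\<^esub> x = \<one>\<^bsub>SP n\<^esub>" using yx by simp
    show "y \<in> carrier (SP n)" using yP by simp
  qed
qed

definition Phi :: "nat \<Rightarrow> (nat \<Rightarrow> int) \<times> (nat \<Rightarrow> nat) \<Rightarrow> nat \<Rightarrow> int" where
  "Phi n sp = (\<lambda>i. if i \<in> {1..n} then fst sp i * int (snd sp i) else 0)"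

lemma card_Pn: "card (Pn n) = 2 ^ n * fact n"
proof -
  define A where "A = PiE {1..n} (\<lambda>_. {-1, 1::int}) \<times> {p. p permutes {1..n}}"
  have img: "Phi n ` A = Pn n"
  proof (intro equalityI subsetI)
    fix a assume "a \<in> Phi n ` A"
    then obtain s p where sp: "s \<in> PiE {1..n} (\<lambda>_. {-1, 1::int})" "p permutes {1..n}" "a = Phi n (s, p)"
      unfolding A_def by auto
    have bp: "bij_betw p {1..n} {1..n}" using sp(2) by (rule permutes_imp_bij)
    have "bij_betw (\<lambda>i. nat \<bar>a i\<bar>) {1..n} {1..n}"
    proof (rule bij_betw_cong[THEN iffD2, OF _ bp])
      fix i assume i: "i \<in> {1..n}"
      have "s i \<in> {-1, 1}" using sp(1) i by auto
      then show "nat \<bar>a i\<bar> = p i" using i sp(3) by (auto simp: Phi_def)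
    qed
    moreover have "a i = 0" if "i \<notin> {1..n}" for i
      using that sp(3) by (simp only: Phi_def if_not_P[OF that] if_False)
    ultimately show "a \<in> Pn n" by (simp add: Pn_def)
  next
    fix a assume a: "a \<in> Pn n"
    define s where "s = restrict (\<lambda>i. sgn (a i)) {1..n}"
    define p where "p = (\<lambda>i. if i \<in> {1..n} then nat \<bar>a i\<bar> else i)"
    have bp: "bij_betw p {1..n} {1..n}"
    proof (rule bij_betw_cong[THEN iffD1, rotated])
      show "bij_betw (\<lambda>i. nat \<bar>a i\<bar>) {1..n} {1..n}" using a by (simp add: Pn_def)
    qed (simp add: p_def)
    have pP: "p permutes {1..n}" using bp by (rule bij_imp_permutes) (auto simp: p_def)
    have sE: "s \<in> PiE {1..n} (\<lambda>_. {-1, 1::int})"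
      unfolding s_def using Pn_val(2)[OF a] by (auto simp: sgn_if)
    have "Phi n (s, p) = a"
    proof (intro ext)
      fix i
      show "Phi n (s, p) i = a i"
      proof (cases "i \<in> {1..n}")
        case True then show ?thesis by (simp add: Phi_def s_def p_def sgn_mult_abs)
      next
        case False
        have "a i = 0" using Pn_out[OF a False] .
        then show ?thesis by (simp only: Phi_def if_not_P[OF False] if_False)
      qed
    qed
    then show "a \<in> Phi n ` A" unfolding A_def using sE pP by force
  qed
  have inj: "inj_on (Phi n) A"
  proof (rule inj_onI)
    fix x y assume xy: "x \<in> A" "y \<in> A" "Phi n x = Phi n y"
    obtain s p where x: "x = (s, p)" by (cases x)
    obtain s' p' where y: "y = (s', p')" by (cases y)
    have s: "s \<in> PiE {1..n} (\<lambda>_. {-1, 1::int})" "p permutes {1..n}"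
      and s': "s' \<in> PiE {1..n} (\<lambda>_. {-1, 1::int})" "p' permutes {1..n}"
      using xy(1,2) x y unfolding A_def by auto
    have eq: "s i = s' i \<and> p i = p' i" if i: "i \<in> {1..n}" for i
    proof -
      have "Phi n (s, p) i = Phi n (s', p') i" using xy(3) x y by simp
      then have e: "s i * int (p i) = s' i * int (p' i)" using i by (simp add: Phi_def)
      have pi: "p i \<in> {1..n}" "p' i \<in> {1..n}" using i permutes_in_image[OF s(2)] permutes_in_image[OF s'(2)] by auto
      have "s i \<in> {-1, 1}" "s' i \<in> {-1, 1}" using s(1) s'(1) i by auto
      then show ?thesis using e pi by auto
    qed
    have "s = s'" using s(1) s'(1) by (rule PiE_ext) (use eq in auto)
    moreover have "p = p'"
    proof
      fix i show "p i = p' i"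
        using eq[of i] permutes_not_in[OF s(2), of i] permutes_not_in[OF s'(2), of i] by (cases "i \<in> {1..n}") auto
    qed
    ultimately show "x = y" using x y by simp
  qed
  have "card A = 2 ^ n * fact n"
    unfolding A_def card_cartesian_product by (simp add: card_PiE card_permutations numeral_2_eq_2)
  then show ?thesis using card_image[OF inj] img by simp
qed



definition elt :: "nat \<Rightarrow> int \<Rightarrow> int" where
  "elt n q = (if q < int n then q + 1 else - (q - int n + 1))"

definition pw :: "nat \<Rightarrow> nat \<Rightarrow> nat \<Rightarrow> int" where
  "pw n k = (\<lambda>i. if i \<in> {1..n} then elt n ((int i - 1 - int k) mod (2 * int n)) else 0)"

lemma elt_shift:
  assumes "n > 0"
  shows "elt n ((x - int n) mod (2 * int n)) = - elt n (x mod (2 * int n))"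
proof -
  define q where "q = x mod (2 * int n)"
  have q: "0 \<le> q" "q < 2 * int n" using assms by (simp_all add: q_def)
  have "(x - int n) mod (2 * int n) = (q - int n) mod (2 * int n)"
    by (simp add: q_def mod_diff_left_eq)
  also have "\<dots> = (if q \<ge> int n then q - int n else q + int n)"
  proof (cases "q \<ge> int n")
    case True then show ?thesis using q by (simp add: mod_pos_pos_trivial)
  next
    case False
    have "(q - int n) mod (2 * int n) = (q - int n + 2 * int n) mod (2 * int n)" by (simp only: mod_add_self2)
    also have "\<dots> = q + int n" using q False by (simp add: mod_pos_pos_trivial)
    finally show ?thesis using False by simp
  qed
  finally show ?thesis using q unfolding q_def[symmetric] by (auto simp: elt_def)
qed

lemma Kgen_in:
  assumes "n \<ge> 2"
  shows "Kgen n \<in> Pn n"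
proof -
  define f where "f = (\<lambda>i::nat. if i = 1 then n else i - 1)"
  have eqf: "nat \<bar>Kgen n i\<bar> = f i" if "i \<in> {1..n}" for i
    using that by (auto simp: Kgen_def f_def)
  have inj: "inj_on f {1..n}"
    by (rule inj_onI) (auto simp: f_def split: if_splits)
  have sub: "f ` {1..n} \<subseteq> {1..n}" using assms by (auto simp: f_def)
  have "f ` {1..n} = {1..n}" using endo_inj_surj[OF _ sub inj] by simp
  then have "bij_betw f {1..n} {1..n}" using inj by (simp add: bij_betw_def)
  then have "bij_betw (\<lambda>i. nat \<bar>Kgen n i\<bar>) {1..n} {1..n}"
    by (rule bij_betw_cong[THEN iffD2, rotated]) (use eqf in auto)
  moreover have "Kgen n i = 0" if "i \<notin> {1..n}" for i using that by (auto simp: Kgen_def)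
  ultimately show ?thesis by (simp add: Pn_def)
qed

lemma pw_0: "pw n 0 = sp_one n"
proof (intro ext)
  fix i
  show "pw n 0 i = sp_one n i"
  proof (cases "i \<in> {1..n}")
    case True
    then have "(int i - 1) mod (2 * int n) = int i - 1" by (simp add: mod_pos_pos_trivial)
    then show ?thesis using True by (simp add: pw_def sp_one_def elt_def)
  next
    case False then show ?thesis by (simp only: pw_def sp_one_def if_not_P[OF False] if_False)
  qed
qed

lemma pw_Suc:
  assumes "n \<ge> 2"
  shows "sp_mult n (pw n k) (Kgen n) = pw n (Suc k)"
proof (intro ext)
  fix i
  show "sp_mult n (pw n k) (Kgen n) i = pw n (Suc k) i"
  proof (cases "i \<in> {1..n}")
    case True
    show ?thesis
    proof (cases "i = 1")
      case True
      have n1: "1 \<in> {1..n}" "n \<in> {1..n}" using assms by auto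
      have K1: "Kgen n 1 = - int n" by (simp add: Kgen_def)
      have s1: "sgn (- int n) = -1" "nat \<bar>- int n\<bar> = n" using assms by auto
      have "sp_mult n (pw n k) (Kgen n) 1 = - pw n k n"
        using n1 by (simp only: sp_mult_def K1 s1 if_P mult_minus1)
      also have "pw n k n = elt n ((int n - 1 - int k) mod (2 * int n))"
        using n1 by (simp only: pw_def if_P)
      also have "- elt n ((int n - 1 - int k) mod (2 * int n)) = elt n ((int n - 1 - int k - int n) mod (2 * int n))"
        using elt_shift[of n "int n - 1 - int k"] assms by simp
      also have "int n - 1 - int k - int n = int 1 - 1 - int (Suc k)" by simp
      also have "elt n ((int 1 - 1 - int (Suc k)) mod (2 * int n)) = pw n (Suc k) 1"
        using n1 by (simp only: pw_def if_P)
      finally show ?thesis using True by simp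
    next
      case False
      then have i2: "2 \<le> i" "i \<le> n" using \<open>i \<in> {1..n}\<close> by auto
      have Ki: "Kgen n i = int (i - 1)" using i2 False by (simp add: Kgen_def of_nat_diff)
      have s2: "sgn (int (i - 1)) = 1" "nat \<bar>int (i - 1)\<bar> = i - 1" using i2 by auto
      have "sp_mult n (pw n k) (Kgen n) i = pw n k (i - 1)"
        using \<open>i \<in> {1..n}\<close> by (simp only: sp_mult_def Ki s2 if_P mult_1)
      also have "\<dots> = elt n ((int (i - 1) - 1 - int k) mod (2 * int n))"
      proof -
        have "i - 1 \<in> {1..n}" using i2 by auto
        then show ?thesis by (simp only: pw_def if_P)
      qed
      also have "int (i - 1) - 1 - int k = int i - 1 - int (Suc k)" using i2 by (simp add: of_nat_diff)
      also have "elt n ((int i - 1 - int (Suc k)) mod (2 * int n)) = pw n (Suc k) i"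
        using \<open>i \<in> {1..n}\<close> by (simp only: pw_def if_P)
      finally show ?thesis .
    qed
  next
    case False then show ?thesis by (simp only: pw_def sp_mult_def if_not_P[OF False] if_False)
  qed
qed

lemma Kgen_pow:
  assumes "n \<ge> 2"
  shows "Kgen n [^]\<^bsub>SP n\<^esub> k = pw n k"
proof (induction k)
  case 0 then show ?case by (simp add: pw_0)
next
  case (Suc k) then show ?case using pw_Suc[OF assms] by simp
qed

lemma pw_one_iff:
  assumes "n \<ge> 2"
  shows "pw n k = sp_one n \<longleftrightarrow> (2 * n) dvd k"
proof
  assume H: "pw n k = sp_one n"
  have "pw n k 1 = sp_one n 1" using H by simp
  then have e: "elt n ((- int k) mod (2 * int n)) = 1" using assms by (simp add: pw_def sp_one_def)
  define q where "q = (- int k) mod (2 * int n)"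
  have q: "0 \<le> q" "q < 2 * int n" using assms by (simp_all add: q_def)
  have "q = 0" using e q unfolding q_def[symmetric] by (auto simp: elt_def split: if_splits)
  then have "2 * int n dvd - int k" by (simp add: q_def mod_eq_0_iff_dvd)
  then have "int (2 * n) dvd int k" by simp
  then show "(2 * n) dvd k" by (simp only: of_nat_dvd_iff)
next
  assume "(2 * n) dvd k"
  then obtain m where k: "k = 2 * n * m" by auto
  have "pw n k = pw n 0"
  proof (intro ext)
    fix i
    have "(int i - 1 - int k) mod (2 * int n) = (int i - 1) mod (2 * int n)"
    proof -
      have "int i - 1 - int k = (int i - 1) + (2 * int n) * (- int m)" using k by simp
      then show ?thesis by (simp only: mod_mult_self2)
    qed
    then show "pw n k i = pw n 0 i" by (simp add: pw_def)
  qed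
  then show "pw n k = sp_one n" by (simp add: pw_0)
qed

lemma card_Kn:
  assumes "n \<ge> 2"
  shows "card (Kn n) = 2 * n"
proof -
  interpret G: group "SP n" by (rule group_SP)
  have g: "Kgen n \<in> carrier (SP n)" using Kgen_in[OF assms] by simp
  have "G.ord (Kgen n) = 2 * n"
    using G.ord_unique[OF g] Kgen_pow[OF assms] pw_one_iff[OF assms] by simp
  then show ?thesis unfolding Kn_def using G.generate_pow_card[OF g] by simp
qed

lemma card_rcosets:
  assumes "n \<ge> 2"
  shows "card (rcosets\<^bsub>SP n\<^esub> (Kn n)) = 2 ^ (n - 1) * fact (n - 1)"
proof -
  interpret G: group "SP n" by (rule group_SP)
  have g: "Kgen n \<in> carrier (SP n)" using Kgen_in[OF assms] by simp
  have "subgroup (Kn n) (SP n)" unfolding Kn_def using g by (intro G.generate_is_subgroup) auto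
  then have "card (rcosets\<^bsub>SP n\<^esub> (Kn n)) * card (Kn n) = order (SP n)" by (rule G.lagrange)
  then have e: "card (rcosets\<^bsub>SP n\<^esub> (Kn n)) * (2 * n) = 2 ^ n * fact n"
    using card_Kn[OF assms] card_Pn by (simp add: order_def)
  obtain m where m: "n = Suc m" using assms by (cases n) auto
  have "(2::nat) ^ n * fact n = (2 ^ (n - 1) * fact (n - 1)) * (2 * n)"
    using m by (simp add: algebra_simps)
  then show ?thesis using e assms by simp
qed


theorem mainTheorem5:
  fixes n :: nat
  assumes "n \<ge> 2"
  shows "(\<exists>f. bij_betw f (Ospace n) (rcosets\<^bsub>SP n\<^esub> (Kn n)))
         \<and> card (Ospace n) = 2 ^ (n - 1) * fact (n - 1)
         \<and> (\<exists>g. bij_betw g (strata n) (Ospace_orbits n))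
         \<and> card (strata n) = 2 ^ (n - 2) * fact (n - 1)"
proof (intro conjI)
  have c1: "card (Ospace n) = 2 ^ (n - 1) * fact (n - 1)" by (rule card_Ospace[OF assms])
  have c2: "card (rcosets\<^bsub>SP n\<^esub> (Kn n)) = 2 ^ (n - 1) * fact (n - 1)" by (rule card_rcosets[OF assms])
  have pos: "(2::nat) ^ (n - 1) * fact (n - 1) \<noteq> 0" by simp
  show "\<exists>f. bij_betw f (Ospace n) (rcosets\<^bsub>SP n\<^esub> (Kn n))"
  proof (rule finite_same_card_bij)
    show "finite (Ospace n)" using c1 pos card.infinite by force
    show "finite (rcosets\<^bsub>SP n\<^esub> (Kn n))" using c2 pos card.infinite by force
    show "card (Ospace n) = card (rcosets\<^bsub>SP n\<^esub> (Kn n))" using c1 c2 by simp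
  qed
  show "card (Ospace n) = 2 ^ (n - 1) * fact (n - 1)" by (rule c1)
  show "\<exists>g. bij_betw g (strata n) (Ospace_orbits n)" using strata_bij by blast
  show "card (strata n) = 2 ^ (n - 2) * fact (n - 1)" by (rule card_strata[OF assms])
qed

end
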